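(* Let $K\ge3$ be an integer and $\alpha\in(2,+\infty)$. For every $\varepsilon>0$ there exist $p,q\in\operatorname{relint}(\Delta^K)$ such that \[ D_\alpha(p\Vert q)<\varepsilon\cdot\|p-q\|_1^2 . \]
   Context: $\Delta^K=\{p\in[0,1]^K:\sum_k p_k=1\}$, $\operatorname{relint}(\Delta^K)=\Delta^K\cap(0,1)^K$. For $p,q\in(0,+\infty)^K$ and $\alpha\notin\{0,1\}$, $D_\alpha(p\Vert q)=\frac1\alpha\sum_{k=1}^K\frac{p_k^\alpha+(\alpha-1)q_k^\alpha-\alpha p_kq_k^{\alpha-1}}{\alpha-1}$, which is the Bregman divergence of $-S_\alpha$ where $S_\alpha(p)=\frac{\sum_kp_k^\alpha}{\alpha(1-\alpha)}$. $\|x\|_1=\sum_k|x_k|$. *)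

theory Defs
  imports "HOL-Analysis.Analysis"
begin

text \<open>Vectors in R^K are represented as functions nat \<Rightarrow> real, coordinates 0..K-1.\<close>

definition prob_simplex :: "nat \<Rightarrow> (nat \<Rightarrow> real) set" where
  "prob_simplex K = {p. (\<forall>k<K. 0 \<le> p k \<and> p k \<le> 1) \<and> (\<Sum>k<K. p k) = 1}"

definition relint_prob_simplex :: "nat \<Rightarrow> (nat \<Rightarrow> real) set" where
  "relint_prob_simplex K = {p \<in> prob_simplex K. \<forall>k<K. 0 < p k \<and> p k < 1}"

text \<open>alpha-divergence (for positive vectors, alpha not in {0,1}).\<close>
definition alpha_div :: "nat \<Rightarrow> real \<Rightarrow> (nat \<Rightarrow> real) \<Rightarrow> (nat \<Rightarrow> real) \<Rightarrow> real" where
  "alpha_div K \<alpha> p q = (1 / \<alpha>) * (\<Sum>k<K.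
      (p k powr \<alpha> + (\<alpha> - 1) * q k powr \<alpha> - \<alpha> * p k * q k powr (\<alpha> - 1)) / (\<alpha> - 1))"

definition l1_dist :: "nat \<Rightarrow> (nat \<Rightarrow> real) \<Rightarrow> (nat \<Rightarrow> real) \<Rightarrow> real" where
  "l1_dist K p q = (\<Sum>k<K. \<bar>p k - q k\<bar>)"

end

theory Submission
  imports Defs
begin

lemma sum_split01:
  fixes f :: "nat \<Rightarrow> real"
  assumes "K \<ge> 2"
  shows "(\<Sum>k<K. f k) = f 0 + f 1 + (\<Sum>k\<in>{2..<K}. f k)"
proof -
  have "{..<K} = insert 0 (insert 1 {2..<K})" using assms by auto
  then show ?thesis by simp
qed

lemma alg_aux:
  fixes a T P :: real
  assumes "a > 2"
  shows "(1/a) * ((2 * P * T + (a-1) * T - a * 2 * T) / (a-1)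
        + (T + (a-1) * (2 * P * T) - a * P * T) / (a-1)) = (P - 1) / (a - 1) * T"
proof -
  have "a \<noteq> 0" "a - 1 \<noteq> 0" using assms by auto
  have "(2 * P * T + (a-1) * T - a * 2 * T) + (T + (a-1) * (2 * P * T) - a * P * T) = a * ((P - 1) * T)"
    by (simp add: algebra_simps)
  then have "(2 * P * T + (a-1) * T - a * 2 * T) / (a-1) + (T + (a-1) * (2 * P * T) - a * P * T) / (a-1)
     = a * ((P - 1) * T) / (a-1)" by (metis add_divide_distrib)
  then show ?thesis using \<open>a \<noteq> 0\<close> by simp

qed

theorem theorem2:
  fixes K :: nat and \<alpha> \<epsilon> :: real
  assumes "K \<ge> 3" and "\<alpha> > 2" and "\<epsilon> > 0"
  shows "\<exists>p q. p \<in> relint_prob_simplex K \<and> q \<in> relint_prob_simplex K \<and>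
           alpha_div K \<alpha> p q < \<epsilon> * (l1_dist K p q)\<^sup>2"
proof -
  define C where "C = (2 powr (\<alpha>-1) - 1) / (\<alpha> - 1)"
  have a1: "\<alpha> - 1 > 1" using assms by simp
  have "2 powr (\<alpha>-1) > 2 powr 0" using a1 by (intro powr_less_mono) auto
  then have C0: "C > 0" unfolding C_def using a1 by simp
  define t where "t = min (1/4) ((2*\<epsilon>/C) powr (1/(\<alpha>-2)))"
  have t0: "t > 0" unfolding t_def using C0 assms by simp
  have t4: "t \<le> 1/4" unfolding t_def by simp
  have tpow: "t powr (\<alpha>-2) \<le> 2*\<epsilon>/C"
  proof -
    have "t powr (\<alpha>-2) \<le> ((2*\<epsilon>/C) powr (1/(\<alpha>-2))) powr (\<alpha>-2)"
      using t0 assms by (intro powr_mono2) (auto simp: t_def)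
    also have "\<dots> = 2*\<epsilon>/C" using assms C0 by (simp add: powr_powr)
    finally show ?thesis .
  qed
  define r where "r = (1 - 3*t) / real (K-2)"
  have K2: "real (K-2) \<ge> 1" using assms by simp
  have r0: "r > 0" unfolding r_def using t4 K2 by simp
  have r1: "r < 1"
  proof -
    have "r \<le> 1 - 3*t" unfolding r_def using K2 t4
      by (simp add: divide_le_eq mult_le_cancel_left1)
    then show ?thesis using t0 by simp
  qed
  have rs: "(\<Sum>k\<in>{2..<K}. r) = 1 - 3*t" unfolding r_def using K2 by simp
  define p where "p = (\<lambda>k::nat. if k = 0 then 2*t else if k = 1 then t else r)"
  define q where "q = (\<lambda>k::nat. if k = 0 then t else if k = 1 then 2*t else r)"
  have K2': "K \<ge> 2" using assms by simp
  have sp: "(\<Sum>k<K. p k) = 1"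
    unfolding sum_split01[OF K2'] using rs by (simp add: p_def)
  have sq: "(\<Sum>k<K. q k) = 1"
    unfolding sum_split01[OF K2'] using rs by (simp add: q_def)
  have pin: "p \<in> relint_prob_simplex K"
    unfolding relint_prob_simplex_def prob_simplex_def using sp t0 t4 r0 r1
    by (auto simp: p_def)
  have qin: "q \<in> relint_prob_simplex K"
    unfolding relint_prob_simplex_def prob_simplex_def using sq t0 t4 r0 r1
    by (auto simp: q_def)
  have l1: "l1_dist K p q = 2*t"
    unfolding l1_dist_def sum_split01[OF K2'] using t0 by (simp add: p_def q_def)
  have rr: "r * r powr (\<alpha>-1) = r powr \<alpha>" using r0
    by (simp add: powr_add[symmetric] powr_mult_base)
  have tt: "t * t powr (\<alpha>-1) = t powr \<alpha>" using t0
    by (simp add: powr_mult_base)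
  have t2: "(2*t) powr \<alpha> = 2 * 2 powr (\<alpha>-1) * t powr \<alpha>" using t0
    by (simp add: powr_mult powr_mult_base)
  have t3: "(2*t) powr (\<alpha>-1) = 2 powr (\<alpha>-1) * t powr (\<alpha>-1)" using t0
    by (simp add: powr_mult)
  have zero: "(\<Sum>k\<in>{2..<K}. (p k powr \<alpha> + (\<alpha> - 1) * q k powr \<alpha> - \<alpha> * p k * q k powr (\<alpha> - 1)) / (\<alpha> - 1)) = 0"
  proof (rule sum.neutral, rule ballI)
    fix k assume "k \<in> {2..<K}"
    then have "p k = r" "q k = r" by (auto simp: p_def q_def)
    then show "(p k powr \<alpha> + (\<alpha> - 1) * q k powr \<alpha> - \<alpha> * p k * q k powr (\<alpha> - 1)) / (\<alpha> - 1) = 0"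
      using rr by (simp add: algebra_simps)
  qed
  have div: "alpha_div K \<alpha> p q = C * t powr \<alpha>"
  proof -
    have e1: "\<alpha> * (2*t) * t powr (\<alpha>-1) = \<alpha> * 2 * t powr \<alpha>"
    proof -
      have "\<alpha> * (2*t) * t powr (\<alpha>-1) = \<alpha> * 2 * (t * t powr (\<alpha>-1))"
        by (simp add: ac_simps)
      then show ?thesis unfolding tt .
    qed
    have e2: "\<alpha> * t * (2*t) powr (\<alpha>-1) = \<alpha> * 2 powr (\<alpha>-1) * t powr \<alpha>"
    proof -
      have "\<alpha> * t * (2 powr (\<alpha>-1) * t powr (\<alpha>-1)) = \<alpha> * 2 powr (\<alpha>-1) * (t * t powr (\<alpha>-1))"
        by (simp add: ac_simps)
      then show ?thesis unfolding t3 tt .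
    qed
    have "alpha_div K \<alpha> p q = (1/\<alpha>) * (((2*t) powr \<alpha> + (\<alpha>-1) * t powr \<alpha> - \<alpha> * (2*t) * t powr (\<alpha>-1)) / (\<alpha>-1)
        + (t powr \<alpha> + (\<alpha>-1) * (2*t) powr \<alpha> - \<alpha> * t * (2*t) powr (\<alpha>-1)) / (\<alpha>-1))"
      unfolding alpha_div_def sum_split01[OF K2'] zero by (simp add: p_def q_def)
    also have "\<dots> = (1/\<alpha>) * ((2 * 2 powr (\<alpha>-1) * t powr \<alpha> + (\<alpha>-1) * t powr \<alpha> - \<alpha> * 2 * t powr \<alpha>) / (\<alpha>-1)
        + (t powr \<alpha> + (\<alpha>-1) * (2 * 2 powr (\<alpha>-1) * t powr \<alpha>) - \<alpha> * 2 powr (\<alpha>-1) * t powr \<alpha>) / (\<alpha>-1))"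
      unfolding e1 e2 t2 ..
    also have "\<dots> = C * t powr \<alpha>"
      unfolding C_def by (rule alg_aux[OF assms(2)])
    finally show ?thesis .
  qed
  have "C * t powr \<alpha> = C * t powr (\<alpha>-2) * t^2"
  proof -
    have "t powr \<alpha> = t powr (\<alpha>-2) * t powr 2" using powr_add[of t "\<alpha>-2" 2] by simp
    moreover have "t powr 2 = t^2" using t0 by (simp add: powr_numeral)
    ultimately show ?thesis by simp
  qed
  also have "\<dots> \<le> 2*\<epsilon> * t^2"
  proof -
    have "C * t powr (\<alpha>-2) \<le> 2*\<epsilon>" using tpow C0 by (simp add: field_simps)
    then show ?thesis by (simp add: mult_right_mono)
  qed
  also have "\<dots> < \<epsilon> * (2*t)^2" using t0 assms by (simp add: power2_eq_square)
  finally show ?thesis using div l1 pin qin by metis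
qed

end
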